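(* Let $d\ge 3$ and let $\mathfrak M$ be a model of $\mathsf{SpecRel}_d$. Then for all inertial observers $m,k\in\mathrm{IOb}$ and all events $e_1,e_2\in Ev_m$, $$\mathsf{time}_m(e_1,e_2)^2-\mathsf{dist}_m(e_1,e_2)^2=\mathsf{time}_k(e_1,e_2)^2-\mathsf{dist}_k(e_1,e_2)^2 .$$
   Context: Fix a natural number $d\ge 2$. Models are first-order structures $\mathfrak M=\langle U;\mathrm B,\mathrm{Ob},\mathrm{IOb},\mathrm{Ph},\mathrm Q,+,\cdot,\le,\mathrm W\rangle$, where $\mathrm B,\mathrm{Ob},\mathrm{IOb},\mathrm{Ph},\mathrm Q$ are unary relations (subsets of $U$: bodies, observers, inertial observers, photons, quantities), $+,\cdot$ are binary function symbols, $\le$ a binary relation symbol, and $\mathrm W$ a $(2+d)$-ary relation; $\mathrm W(m,b,\vec p)$ is read "observer $m$ coordinatizes body $b$ at coordinate point $\vec p\in\mathrm Q^d$". For $\vec p=\langle p_1,\dots,p_d\rangle\in\mathrm Q^d$ write $p_t:=p_1$ (time component), $\vec p_s:=\langle p_2,\dots,p_d\rangle$ (space component), $|\vec p|:=\sqrt{p_1^2+\dots+p_n^2}$ for $\vec p\in \mathrm Q^n$ (Euclidean length); $\mathrm Q^d$ carries its vector-space operations and $\vec o$ is the origin. Define $ev_m(\vec p):=\{b\in\mathrm B:\mathrm W(m,b,\vec p)\}$, $Cd_m:=\{\vec p\in\mathrm Q^d: ev_m(\vec p)\neq\emptyset\}$, $Ev_m:=\{ev_m(\vec p):\vec p\in Cd_m\}$,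 $Ev:=\bigcup_{m\in\mathrm{Ob}}Ev_m$. $Crd_m(e)$ denotes the unique $\vec p\in Cd_m$ with $ev_m(\vec p)=e$; any statement involving $Crd_m(e)$ (or the notions below built from it) tacitly asserts that such a unique $\vec p$ exists. $\mathsf{time}_m(e_1,e_2):=|Crd_m(e_1)_t-Crd_m(e_2)_t|$, $\mathsf{dist}_m(e_1,e_2):=|Crd_m(e_1)_s-Crd_m(e_2)_s|$, and $e_1\sim_m e_2$ (simultaneous for $m$) iff $Crd_m(e_1)_t=Crd_m(e_2)_t$. $\mathsf{SpecRel}_d$ consists of the axioms: AxFrame: $\mathrm{Ob}\cup\mathrm{Ph}\subseteq\mathrm B$, $\mathrm{IOb}\subseteq\mathrm{Ob}$, $U=\mathrm B\cup\mathrm Q$, $\mathrm B\cap\mathrm Q=\emptyset$, $\mathrm W\subseteq\mathrm{Ob}\times\mathrm B\times\mathrm Q^d$, $+,\cdot$ are binary operations on $\mathrm Q$ and $\le$ is a binary relation on $\mathrm Q$. AxEOF: $\langle\mathrm Q;+,\cdot,\le\rangle$ is a Euclidean ordered field (a linearly ordered field in which every positive element has a square root). AxSelf$^-$: $\forall m\in\mathrm{Ob}\ \forall\vec p\in Cd_m\ (m\in ev_m(\vec p)\iff \vec p_s=\vec o)$. AxPh$_0$: $\forall m\in\mathrm{IOb}\ \forall\vec p,\vec q\in\mathrm Q^d\ (|\vec p_s-\vec q_s|=|p_t-q_t|\iff \mathrm{Ph}\cap ev_m(\vec p)\cap ev_m(\vec q)\neq\emptyset)$. AxEv: $\forall m,k\in\mathrm{IOb}\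 Ev_m=Ev_k$. AxSimDist: $\forall m,k\in\mathrm{IOb}\ \forall e_1,e_2\in Ev_m\ (e_1\sim_m e_2\wedge e_1\sim_k e_2\Rightarrow \mathsf{dist}_m(e_1,e_2)=\mathsf{dist}_k(e_1,e_2))$. *)

theory Defs
  imports Main
begin

text \<open>Two-sorted rendering of the models of SpecRel_d: bodies are the elements of
  type 'b (so B = UNIV), quantities are the elements of a linearly ordered field 'q
  (so Q = UNIV).  Coordinate points in Q^d are lists of length d; the first entry is
  the time component, the tail is the space component.\<close>

definition ev :: "('b \<Rightarrow> 'b \<Rightarrow> 'q list \<Rightarrow> bool) \<Rightarrow> 'b \<Rightarrow> 'q list \<Rightarrow> 'b set" where
  "ev W m p = {b. W m b p}"

definition Cd :: "nat \<Rightarrow> ('b \<Rightarrow> 'b \<Rightarrow> 'q list \<Rightarrow> bool) \<Rightarrow> 'b \<Rightarrow> 'q list set" where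
  "Cd d W m = {p. length p = d \<and> ev W m p \<noteq> {}}"

definition Evm :: "nat \<Rightarrow> ('b \<Rightarrow> 'b \<Rightarrow> 'q list \<Rightarrow> bool) \<Rightarrow> 'b \<Rightarrow> 'b set set" where
  "Evm d W m = ev W m ` Cd d W m"

definition EvAll :: "nat \<Rightarrow> 'b set \<Rightarrow> ('b \<Rightarrow> 'b \<Rightarrow> 'q list \<Rightarrow> bool) \<Rightarrow> 'b set set" where
  "EvAll d Ob W = (\<Union>m\<in>Ob. Evm d W m)"

definition has_crd :: "nat \<Rightarrow> ('b \<Rightarrow> 'b \<Rightarrow> 'q list \<Rightarrow> bool) \<Rightarrow> 'b \<Rightarrow> 'b set \<Rightarrow> bool" where
  "has_crd d W m e = (\<exists>!p. p \<in> Cd d W m \<and> ev W m p = e)"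

definition Crd :: "nat \<Rightarrow> ('b \<Rightarrow> 'b \<Rightarrow> 'q list \<Rightarrow> bool) \<Rightarrow> 'b \<Rightarrow> 'b set \<Rightarrow> 'q list" where
  "Crd d W m e = (THE p. p \<in> Cd d W m \<and> ev W m p = e)"

definition vsub :: "'q::ab_group_add list \<Rightarrow> 'q list \<Rightarrow> 'q list" where
  "vsub p q = map2 (-) p q"

definition esqrt :: "'q::linordered_field \<Rightarrow> 'q" where
  "esqrt x = (THE y. 0 \<le> y \<and> y * y = x)"

definition elen :: "'q::linordered_field list \<Rightarrow> 'q" where
  "elen v = esqrt (sum_list (map (\<lambda>x. x ^ 2) v))"

definition time :: "nat \<Rightarrow> ('b \<Rightarrow> 'b \<Rightarrow> 'q::linordered_field list \<Rightarrow> bool) \<Rightarrow> 'b \<Rightarrow> 'b set \<Rightarrow> 'b set \<Rightarrow> 'q" where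
  "time d W m e1 e2 = \<bar>hd (Crd d W m e1) - hd (Crd d W m e2)\<bar>"

definition dist :: "nat \<Rightarrow> ('b \<Rightarrow> 'b \<Rightarrow> 'q::linordered_field list \<Rightarrow> bool) \<Rightarrow> 'b \<Rightarrow> 'b set \<Rightarrow> 'b set \<Rightarrow> 'q" where
  "dist d W m e1 e2 = elen (vsub (tl (Crd d W m e1)) (tl (Crd d W m e2)))"

definition simul :: "nat \<Rightarrow> ('b \<Rightarrow> 'b \<Rightarrow> 'q list \<Rightarrow> bool) \<Rightarrow> 'b \<Rightarrow> 'b set \<Rightarrow> 'b set \<Rightarrow> bool" where
  "simul d W m e1 e2 = (hd (Crd d W m e1) = hd (Crd d W m e2))"

definition AxFrame :: "nat \<Rightarrow> 'b set \<Rightarrow> 'b set \<Rightarrow> ('b \<Rightarrow> 'b \<Rightarrow> 'q list \<Rightarrow> bool) \<Rightarrow> bool" where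
  "AxFrame d Ob IOb W = (IOb \<subseteq> Ob \<and> (\<forall>m b p. W m b p \<longrightarrow> m \<in> Ob \<and> length p = d))"

definition AxEOF :: "'q::linordered_field itself \<Rightarrow> bool" where
  "AxEOF _ = (\<forall>x::'q. 0 < x \<longrightarrow> (\<exists>y. y * y = x))"

definition AxSelf :: "nat \<Rightarrow> 'b set \<Rightarrow> ('b \<Rightarrow> 'b \<Rightarrow> 'q::zero list \<Rightarrow> bool) \<Rightarrow> bool" where
  "AxSelf d Ob W = (\<forall>m\<in>Ob. \<forall>p\<in>Cd d W m. (m \<in> ev W m p \<longleftrightarrow> tl p = replicate (d - 1) 0))"

definition AxPh0 :: "nat \<Rightarrow> 'b set \<Rightarrow> 'b set \<Rightarrow> ('b \<Rightarrow> 'b \<Rightarrow> 'q::linordered_field list \<Rightarrow> bool) \<Rightarrow> bool" where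
  "AxPh0 d IOb Ph W = (\<forall>m\<in>IOb. \<forall>p q. length p = d \<longrightarrow> length q = d \<longrightarrow>
      (elen (vsub (tl p) (tl q)) = \<bar>hd p - hd q\<bar> \<longleftrightarrow> Ph \<inter> ev W m p \<inter> ev W m q \<noteq> {}))"

definition AxEv :: "nat \<Rightarrow> 'b set \<Rightarrow> ('b \<Rightarrow> 'b \<Rightarrow> 'q list \<Rightarrow> bool) \<Rightarrow> bool" where
  "AxEv d IOb W = (\<forall>m\<in>IOb. \<forall>k\<in>IOb. Evm d W m = Evm d W k)"

text \<open>The tacit definedness of Crd is read as part of the premise.\<close>
definition AxSimDist :: "nat \<Rightarrow> 'b set \<Rightarrow> ('b \<Rightarrow> 'b \<Rightarrow> 'q::linordered_field list \<Rightarrow> bool) \<Rightarrow> bool" where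
  "AxSimDist d IOb W = (\<forall>m\<in>IOb. \<forall>k\<in>IOb. \<forall>e1\<in>Evm d W m. \<forall>e2\<in>Evm d W m.
      has_crd d W m e1 \<and> has_crd d W m e2 \<and> has_crd d W k e1 \<and> has_crd d W k e2 \<and>
      simul d W m e1 e2 \<and> simul d W k e1 e2 \<longrightarrow> dist d W m e1 e2 = dist d W k e1 e2)"

definition SpecRel :: "nat \<Rightarrow> 'b set \<Rightarrow> 'b set \<Rightarrow> 'b set \<Rightarrow> ('b \<Rightarrow> 'b \<Rightarrow> 'q::linordered_field list \<Rightarrow> bool) \<Rightarrow> bool" where
  "SpecRel d Ob IOb Ph W = (AxFrame d Ob IOb W \<and> AxEOF TYPE('q) \<and> AxSelf d Ob W \<and>
      AxPh0 d IOb Ph W \<and> AxEv d IOb W \<and> AxSimDist d IOb W)"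

end

theory Submission
  imports Defs "HOL-Library.Function_Algebras"
begin


definition V :: "nat \<Rightarrow> (nat \<Rightarrow> 'q::linordered_field) set" where
  "V d = {x. \<forall>i\<ge>d. x i = 0}"

definition eta :: "nat \<Rightarrow> (nat \<Rightarrow> 'q::linordered_field) \<Rightarrow> (nat \<Rightarrow> 'q) \<Rightarrow> 'q" where
  "eta d x y = x 0 * y 0 - (\<Sum>i\<in>{1..<d}. x i * y i)"

abbreviation Qf where "Qf d x \<equiv> eta d x x"

definition sc :: "'q::linordered_field \<Rightarrow> (nat \<Rightarrow> 'q) \<Rightarrow> (nat \<Rightarrow> 'q)" where
  "sc c x = (\<lambda>i. c * x i)"

definition ee :: "nat \<Rightarrow> nat \<Rightarrow> 'q::linordered_field" where
  "ee i = (\<lambda>j. if j = i then 1 else 0)"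

lemma sc_apply[simp]: "sc c x i = c * x i" by (simp add: sc_def)
lemma ee_apply[simp]: "ee i j = (if j = i then 1 else 0)" by (simp add: ee_def)

lemma V_add[simp,intro]: "x \<in> V d \<Longrightarrow> y \<in> V d \<Longrightarrow> x + y \<in> V d" by (simp add: V_def)
lemma V_diff[simp,intro]: "x \<in> V d \<Longrightarrow> y \<in> V d \<Longrightarrow> x - y \<in> V d" by (simp add: V_def)
lemma V_uminus[simp,intro]: "x \<in> V d \<Longrightarrow> - x \<in> V d" by (simp add: V_def)
lemma V_sc[simp,intro]: "x \<in> V d \<Longrightarrow> sc c x \<in> V d" by (simp add: V_def)
lemma V_zero[simp,intro]: "0 \<in> V d" by (simp add: V_def)
lemma V_ee[simp,intro]: "i < d \<Longrightarrow> ee i \<in> V d" by (simp add: V_def)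

lemma sc_add: "sc c (x + y) = sc c x + sc c y" by (simp add: fun_eq_iff algebra_simps)
lemma sc_diff: "sc c (x - y) = sc c x - sc c y" by (simp add: fun_eq_iff algebra_simps)
lemma add_sc: "sc (a + b) x = sc a x + sc b x" by (simp add: fun_eq_iff algebra_simps)
lemma sc_sc: "sc a (sc b x) = sc (a * b) x" by (simp add: fun_eq_iff algebra_simps)
lemma sc_one[simp]: "sc 1 x = x" by (simp add: fun_eq_iff)
lemma sc_zero[simp]: "sc 0 x = 0" by (simp add: fun_eq_iff)
lemma sc_zero2[simp]: "sc c 0 = 0" by (simp add: fun_eq_iff)
lemma sc_minus1: "sc (-1) x = - x" by (simp add: fun_eq_iff)
lemma sc_uminus: "sc (- c) x = - sc c x" by (simp add: fun_eq_iff)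
lemma sc_eq0: "sc c x = 0 \<longleftrightarrow> c = 0 \<or> x = 0" by (auto simp: fun_eq_iff)

lemma eta_sym: "eta d x y = eta d y x" by (simp add: eta_def mult.commute)
lemma eta_add1: "eta d (x + y) z = eta d x z + eta d y z"
  by (simp add: eta_def algebra_simps sum.distrib)
lemma eta_add2: "eta d z (x + y) = eta d z x + eta d z y"
  by (simp add: eta_def algebra_simps sum.distrib)
lemma eta_diff1: "eta d (x - y) z = eta d x z - eta d y z"
  by (simp add: eta_def algebra_simps sum_subtractf)
lemma eta_diff2: "eta d z (x - y) = eta d z x - eta d z y"
  by (simp add: eta_def algebra_simps sum_subtractf)
lemma eta_sc1: "eta d (sc c x) y = c * eta d x y"
  by (simp add: eta_def algebra_simps sum_distrib_left)
lemma eta_sc2: "eta d y (sc c x) = c * eta d y x"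
  by (simp add: eta_def algebra_simps sum_distrib_left)
lemma eta_uminus1: "eta d (- x) y = - eta d x y"
  by (simp add: eta_def algebra_simps sum_negf)
lemma eta_uminus2: "eta d y (- x) = - eta d y x"
  by (simp add: eta_def algebra_simps sum_negf)
lemma eta_zero1[simp]: "eta d 0 y = 0" by (simp add: eta_def)
lemma eta_zero2[simp]: "eta d y 0 = 0" by (simp add: eta_def)

lemmas eta_lin = eta_add1 eta_add2 eta_diff1 eta_diff2 eta_sc1 eta_sc2 eta_uminus1 eta_uminus2

lemma eta_ee2: "eta d x (ee j) = (if j = 0 then x 0 else if j < d then - x j else 0)"
proof -
  have "(\<Sum>i\<in>{1..<d}. x i * ee j i) = (if 1 \<le> j \<and> j < d then x j else 0)"
    by (simp add: if_distrib[of "\<lambda>v. x _ * v"] cong: if_cong)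
  then show ?thesis by (auto simp: eta_def)
qed

lemma eta_ee1: "eta d (ee j) x = (if j = 0 then x 0 else if j < d then - x j else 0)"
  using eta_ee2 eta_sym by metis

lemma Qf_add: "Qf d (x + y) = Qf d x + 2 * eta d x y + Qf d y"
  by (simp add: eta_lin eta_sym[of d y x])
lemma Qf_diff: "Qf d (x - y) = Qf d x - 2 * eta d x y + Qf d y"
  by (simp add: eta_lin eta_sym[of d y x])
lemma Qf_sc: "Qf d (sc c x) = c * c * Qf d x"
  by (simp add: eta_lin)

lemma Qf_time0:
  assumes "x 0 = 0" shows "Qf d x = - (\<Sum>i\<in>{1..<d}. x i * x i)"
  using assms by (simp add: eta_def)

lemma N0:
  assumes "x \<in> V d" "Qf d x = 0" "x 0 = 0" shows "x = 0"
proof -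
  have "(\<Sum>i\<in>{1..<d}. x i * x i) = 0" using assms Qf_time0[of x d] by simp
  then have "\<forall>i\<in>{1..<d}. x i * x i = 0"
    by (subst sum_nonneg_eq_0_iff[symmetric]) auto
  then show ?thesis using assms(1,3) unfolding V_def
    by (auto simp: fun_eq_iff) (metis Suc_leI atLeastLessThan_iff gr0I linorder_not_le mult_zero_left mult_eq_0_iff)
qed

lemma N0':
  assumes "x \<in> V d" "x 0 = 0" "x \<noteq> 0" shows "Qf d x < 0"
proof -
  have "(\<Sum>i\<in>{1..<d}. x i * x i) \<ge> 0" by (auto intro: sum_nonneg)
  then have "Qf d x \<le> 0" using Qf_time0[of x d, OF assms(2)] by simp
  moreover have "Qf d x \<noteq> 0" using N0 assms by blast
  ultimately show ?thesis by simp
qed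

lemma null_t0:
  assumes "n \<in> V d" "Qf d n = 0" "n \<noteq> 0" shows "n 0 \<noteq> 0"
  using N0 assms by blast

lemma N1:
  assumes "n \<in> V d" "m \<in> V d" "Qf d n = 0" "Qf d m = 0" "n \<noteq> 0" "eta d n m = 0"
  shows "m = sc (m 0 / n 0) n"
proof -
  define c where "c = m 0 / n 0"
  have n0: "n 0 \<noteq> 0" using null_t0 assms by blast
  define z where "z = m - sc c n"
  have "z 0 = 0" using n0 by (simp add: z_def c_def)
  moreover have "Qf d z = 0" unfolding z_def
    using assms by (simp add: eta_lin eta_sym[of d m n])
  moreover have "z \<in> V d" using assms by (simp add: z_def)
  ultimately have "z = 0" using N0 by blast
  then show ?thesis by (simp add: z_def c_def)
qed

lemma eta_ee00[simp]: "eta d (ee 0) (ee 0) = 1" by (simp add: eta_ee2)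

definition np :: "nat \<Rightarrow> nat \<Rightarrow> 'q::linordered_field" where "np i = ee 0 + ee i"
definition nm :: "nat \<Rightarrow> nat \<Rightarrow> 'q::linordered_field" where "nm i = ee 0 - ee i"

lemma np_V[simp]: "i < d \<Longrightarrow> np i \<in> V d" by (simp add: np_def)
lemma nm_V[simp]: "i < d \<Longrightarrow> nm i \<in> V d" by (simp add: nm_def)
lemma eta_np: "eta d w (np i) = (if 1 \<le> i \<and> i < d then w 0 - w i else 0) " if "1 \<le> i" "i < d"
  using that by (simp add: np_def eta_lin eta_ee2)
lemma eta_nm: "eta d w (nm i) = w 0 + w i" if "1 \<le> i" "i < d"
  using that by (simp add: nm_def eta_lin eta_ee2)
lemma Qf_np[simp]: "1 \<le> i \<Longrightarrow> i < d \<Longrightarrow> Qf d (np i) = (0::'q::linordered_field)"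
  by (simp add: np_def eta_lin eta_ee2 eta_ee1)
lemma Qf_nm[simp]: "1 \<le> i \<Longrightarrow> i < d \<Longrightarrow> Qf d (nm i) = (0::'q::linordered_field)"
  by (simp add: nm_def eta_lin eta_ee2 eta_ee1)
lemma np_nz[simp]: "np i \<noteq> (0::nat\<Rightarrow>'q::linordered_field)"
  by (simp add: np_def fun_eq_iff) (metis one_neq_zero zero_neq_one add.right_neutral)
lemma nm_nz[simp]: "1 \<le> i \<Longrightarrow> nm i \<noteq> (0::nat\<Rightarrow>'q::linordered_field)"
  by (auto simp add: nm_def fun_eq_iff intro!: exI[of _ 0])

lemma LC:
  assumes "2 \<le> d" "x \<in> V d" "y \<in> V d"
    and H: "\<And>z. z \<in> V d \<Longrightarrow> Qf d (x - z) = 0 \<longleftrightarrow> Qf d (y - z) = (0::'q::linordered_field)"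
  shows "x = y"
proof -
  define w where "w = x - y"
  have key: "eta d w n = 0" if "n \<in> V d" "Qf d n = 0" for n
  proof -
    have "Qf d (y - (y + n)) = 0" using that by (simp add: eta_lin)
    then have "Qf d (x - (y + n)) = 0" using H[of "y + n"] assms that by simp
    moreover have "x - (y + n) = w - n" by (simp add: w_def)
    ultimately have 1: "Qf d (w - n) = 0" by simp
    have "Qf d (y - (y - n)) = 0" using that by (simp add: eta_lin)
    then have "Qf d (x - (y - n)) = 0" using H[of "y - n"] assms that by simp
    moreover have "x - (y - n) = w + n" by (simp add: w_def)
    ultimately have 2: "Qf d (w + n) = 0" by simp
    from 1 2 show ?thesis using that by (simp add: Qf_add Qf_diff)
  qed
  have "w i = 0" if "1 \<le> i" "i < d" for i
    using key[of "np i"] key[of "nm i"] that eta_np[OF that, of w] eta_nm[OF that, of w] by simp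
  moreover have "w 0 = 0"
    using key[of "np 1"] key[of "nm 1"] eta_np[of 1 d w] eta_nm[of 1 d w] assms(1) by simp
  moreover have "w i = 0" if "i \<ge> d" for i using that assms by (simp add: w_def V_def)
  ultimately have "w = 0" by (metis leI less_one fun_eq_iff zero_fun_apply not_less_zero)
  then show ?thesis by (simp add: w_def)
qed

lemma PL:
  assumes "a \<in> V d" "b \<in> V d" "x \<in> V d" "a \<noteq> b"
    "Qf d (x - a) = 0" "Qf d (x - b) = 0" "Qf d (a - b) = (0::'q::linordered_field)"
  shows "\<exists>c. x = a + sc c (b - a)"
proof -
  define u where "u = x - a"
  define v where "v = b - a"
  have "Qf d v = 0" using assms(7) by (simp add: v_def eta_lin eta_sym[of d a b])
  have "u - v = x - b" by (simp add: u_def v_def)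
  then have h1: "Qf d (u - v) = 0" using assms(6) by simp
  have h2: "Qf d u = 0" using assms(5) by (simp add: u_def)
  have h3: "Qf d (u - v) = Qf d u - 2 * eta d u v + Qf d v" by (rule Qf_diff)
  have "eta d u v = 0" using h1 h2 h3 \<open>Qf d v = 0\<close> by simp
  then have "eta d v u = 0" by (simp add: eta_sym[of d u v])
  then have "u = sc (u 0 / v 0) v"
    using N1[of v d u] assms \<open>Qf d v = 0\<close> by (simp add: u_def v_def)
  moreover have "x = a + u" by (simp add: u_def)
  ultimately have "x = a + sc (u 0 / v 0) (b - a)" by (simp add: v_def)
  then show ?thesis by blast
qed

definition trunc :: "nat \<Rightarrow> (nat \<Rightarrow> 'q::linordered_field) \<Rightarrow> nat \<Rightarrow> 'q" where
  "trunc k x = (\<lambda>i. if i < k then x i else 0)"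

lemma span_V:
  assumes G0: "0 \<in> G" and Gadd: "\<And>x y. x \<in> G \<Longrightarrow> y \<in> G \<Longrightarrow> x + y \<in> G"
    and Ge: "\<And>i c. i < d \<Longrightarrow> sc c (ee i) \<in> G"
  shows "V d \<subseteq> G"
proof
  fix x :: "nat \<Rightarrow> 'a" assume x: "x \<in> V d"
  have "k \<le> d \<Longrightarrow> trunc k x \<in> G" for k
  proof (induction k)
    case 0 then show ?case using G0 by (simp add: trunc_def zero_fun_def)
  next
    case (Suc k)
    have "trunc (Suc k) x = trunc k x + sc (x k) (ee k)" by (auto simp: trunc_def fun_eq_iff less_Suc_eq)
    moreover have "trunc k x \<in> G" using Suc by simp
    moreover have "sc (x k) (ee k) \<in> G" using Suc Ge by simp
    ultimately show ?case using Gadd by metis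
  qed
  moreover have "trunc d x = x" using x by (auto simp: trunc_def V_def fun_eq_iff)
  ultimately show "x \<in> G" by (metis order_refl)
qed

lemma NG:
  assumes d3: "3 \<le> d" and G0: "0 \<in> G" and Gadd: "\<And>x y. x \<in> G \<Longrightarrow> y \<in> G \<Longrightarrow> x + y \<in> G"
    and u: "u \<in> V d" "Qf d u = 0" "u \<noteq> (0::nat\<Rightarrow>'q::linordered_field)"
    and GN: "\<And>n. n \<in> V d \<Longrightarrow> Qf d n = 0 \<Longrightarrow> eta d u n \<noteq> 0 \<Longrightarrow> n \<in> G"
  shows "V d \<subseteq> G"
proof -
  have u0: "u 0 \<noteq> 0" using null_t0 u by blast
  have GS: "sc c n \<in> G" if "n \<in> V d" "Qf d n = 0" "eta d u n \<noteq> 0" for n c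
  proof (cases "c = 0")
    case True then show ?thesis using G0 by simp
  next
    case False then show ?thesis using that GN[of "sc c n"] by (simp add: eta_lin Qf_sc)
  qed
  have anyi: "eta d u (np i) \<noteq> 0 \<or> eta d u (nm i) \<noteq> 0" if "1 \<le> i" "i < d" for i
    using eta_np[OF that, of u] eta_nm[OF that, of u] that u0 by auto
  have "\<exists>i. 1 \<le> i \<and> i < d \<and> eta d u (np i) \<noteq> 0 \<and> eta d u (nm i) \<noteq> 0"
  proof (rule ccontr)
    assume nex: "\<not> ?thesis"
    have bad: "u i * u i = u 0 * u 0" if "1 \<le> i" "i < d" for i
    proof -
      have "u 0 - u i = 0 \<or> u 0 + u i = 0"
        using that eta_np[OF that, of u] eta_nm[OF that, of u] nex by auto
      then have "u i = u 0 \<or> u i = - u 0" by (auto simp: algebra_simps)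
      then show ?thesis by auto
    qed
    have "(\<Sum>i\<in>{1,2}. u i * u i) \<le> (\<Sum>i\<in>{1..<d}. u i * u i)"
      by (rule sum_mono2) (use d3 in auto)
    moreover have "(\<Sum>i\<in>{1..<d}. u i * u i) = u 0 * u 0" using u(2) by (simp add: eta_def)
    moreover have "(\<Sum>i\<in>{1,2}. u i * u i) = 2 * (u 0 * u 0)" using bad[of 1] bad[of 2] d3 by simp
    ultimately have "u 0 * u 0 \<le> 0" by simp
    moreover have "0 < u 0 * u 0" using u0 by (auto simp: zero_less_mult_iff linorder_neq_iff)
    ultimately show False by simp
  qed
  then obtain j where j: "1 \<le> j" "j < d" "eta d u (np j) \<noteq> 0" "eta d u (nm j) \<noteq> 0" by blast
  have e0: "sc c (ee 0) \<in> G" for c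
  proof -
    have "sc c (ee 0) = sc (c/2) (np j) + sc (c/2) (nm j)"
      by (auto simp: fun_eq_iff np_def nm_def algebra_simps)
    then show ?thesis using GS[of "np j" "c/2"] GS[of "nm j" "c/2"] j Gadd by simp
  qed
  have "sc c (ee i) \<in> G" if "i < d" for i c
  proof (cases "i = 0")
    case True then show ?thesis using e0 by simp
  next
    case False
    then have i: "1 \<le> i" "i < d" using that by auto
    show ?thesis
    proof (cases "eta d u (np i) \<noteq> 0")
      case True
      have "sc c (ee i) = sc c (np i) + sc (-c) (ee 0)" using i
        by (auto simp: fun_eq_iff np_def algebra_simps)
      then show ?thesis using GS[of "np i" c] e0[of "-c"] i True Gadd by simp
    next
      case False
      then have "eta d u (nm i) \<noteq> 0" using anyi i by blast
      moreover have "sc c (ee i) = sc c (ee 0) + sc (-c) (nm i)" using i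
        by (auto simp: fun_eq_iff nm_def algebra_simps)
      ultimately show ?thesis using GS[of "nm i" "-c"] e0[of c] i Gadd by simp
    qed
  qed
  then show ?thesis using span_V[of G d] G0 Gadd by blast
qed



lemma line_alg1: "(p::nat\<Rightarrow>'q::linordered_field) + sc s n - p = sc s n" by simp
lemma line_alg2: "(p::nat\<Rightarrow>'q::linordered_field) + sc s n - (p + n) = sc (s - 1) n"
  by (simp add: fun_eq_iff algebra_simps)
lemma line_alg3: "(p::nat\<Rightarrow>'q::linordered_field) - (p + n) = - n"
  by simp

locale LM =
  fixes d :: nat and F :: "(nat \<Rightarrow> 'q::linordered_field) \<Rightarrow> (nat \<Rightarrow> 'q)"
  assumes d3: "3 \<le> d"
    and FV: "x \<in> V d \<Longrightarrow> F x \<in> V d"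
    and Fsurj: "y \<in> V d \<Longrightarrow> \<exists>x\<in>V d. F x = y"
    and Flight: "x \<in> V d \<Longrightarrow> y \<in> V d \<Longrightarrow> Qf d (x - y) = 0 \<longleftrightarrow> Qf d (F x - F y) = 0"
    and Fsim: "x \<in> V d \<Longrightarrow> y \<in> V d \<Longrightarrow> x 0 = y 0 \<Longrightarrow> F x 0 = F y 0 \<Longrightarrow>
       Qf d (F x - F y) = Qf d (x - y)"
begin

lemma Finj: assumes "x \<in> V d" "y \<in> V d" "F x = F y" shows "x = y"
proof (rule LC[of d])
  show "2 \<le> d" using d3 by simp
  fix z :: "nat \<Rightarrow> 'q" assume "z \<in> V d"
  show "Qf d (x - z) = 0 \<longleftrightarrow> Qf d (y - z) = 0"
    using Flight[of x z] Flight[of y z] assms \<open>z \<in> V d\<close> by simp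
qed (use assms in auto)

lemma LL:
  assumes p: "p \<in> V d" and n: "n \<in> V d" "Qf d n = 0" "n \<noteq> 0"
  shows "F (p + n) - F p \<in> V d" "Qf d (F (p + n) - F p) = 0" "F (p + n) - F p \<noteq> 0"
    "\<And>s. \<exists>t. F (p + sc s n) = F p + sc t (F (p + n) - F p)"
    "\<And>t. \<exists>s. F (p + sc s n) = F p + sc t (F (p + n) - F p)"
proof -
  define q where "q = p + n"
  have q: "q \<in> V d" using p n by (simp add: q_def)
  have pq: "p \<noteq> q" using n by (simp add: q_def)
  have "Qf d (p - q) = 0" using n by (simp add: q_def eta_lin)
  then have FQ: "Qf d (F p - F q) = 0" using Flight p q by blast
  have Fpq: "F p \<noteq> F q" using Finj p q pq by blast
  show "F (p + n) - F p \<in> V d" using FV p q q_def by simp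
  show "Qf d (F (p + n) - F p) = 0" using FQ by (simp add: q_def[symmetric] eta_lin eta_sym[of d "F p" "F q"])
  show "F (p + n) - F p \<noteq> 0" using Fpq by (simp add: q_def[symmetric])
  show "\<exists>t. F (p + sc s n) = F p + sc t (F (p + n) - F p)" for s
  proof -
    define x where "x = p + sc s n"
    have x: "x \<in> V d" using p n by (simp add: x_def)
    have "Qf d (x - p) = 0" using n by (simp add: x_def eta_lin)
    then have 1: "Qf d (F x - F p) = 0" using Flight x p by blast
    have "x - q = sc (s - 1) n" by (simp add: x_def q_def fun_eq_iff algebra_simps)
    then have "Qf d (x - q) = 0" using n by (simp add: eta_lin)
    then have 2: "Qf d (F x - F q) = 0" using Flight x q by blast
    obtain c where "F x = F p + sc c (F q - F p)"
      using PL[OF FV[OF p] FV[OF q] FV[OF x] Fpq 1 2 FQ] by blast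
    then show ?thesis by (auto simp: x_def q_def)
  qed
  show "\<exists>s. F (p + sc s n) = F p + sc t (F (p + n) - F p)" for t
  proof -
    define y where "y = F p + sc t (F q - F p)"
    have y: "y \<in> V d" using FV p q by (simp add: y_def)
    obtain x where x: "x \<in> V d" "F x = y" using Fsurj y by blast
    have "y - F p = sc t (F q - F p)" by (simp add: y_def)
    then have "Qf d (y - F p) = 0" using FQ by (simp add: eta_lin eta_sym[of d "F p" "F q"])
    then have 1: "Qf d (x - p) = 0" using Flight x p by simp
    have "y - F q = sc (t - 1) (F q - F p)" by (simp add: y_def fun_eq_iff algebra_simps)
    then have "Qf d (y - F q) = 0" using FQ by (simp add: eta_lin eta_sym[of d "F p" "F q"])
    then have 2: "Qf d (x - q) = 0" using Flight x q by simp
    obtain c where "x = p + sc c (q - p)"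
      using PL[OF p q x(1) pq 1 2 \<open>Qf d (p - q) = 0\<close>] by blast
    then have "x = p + sc c n" by (simp add: q_def)
    then show ?thesis using x y_def q_def by blast
  qed
qed

lemma par_lemma:
  assumes p: "p \<in> V d" and u: "u \<in> V d" "Qf d u = 0" "u \<noteq> 0"
    and v: "v \<in> V d" "Qf d v = 0" "v \<noteq> 0" and uv: "eta d u v \<noteq> 0"
  shows "\<exists>c. F (p + u + v) - F (p + u) = sc c (F (p + v) - F p)"
proof -
  define a where "a = p + u"
  have a: "a \<in> V d" using p u by (simp add: a_def)
  define V' where "V' = F (p + v) - F p"
  define W' where "W' = F (a + v) - F a"
  define w where "w = F a - F p"
  have V': "V' \<in> V d" "Qf d V' = 0" "V' \<noteq> 0" using LL[OF p v] by (simp_all add: V'_def)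
  have W': "W' \<in> V d" "Qf d W' = 0" "W' \<noteq> 0" using LL[OF a v] by (simp_all add: W'_def)
  have w: "Qf d w = 0" using LL[OF p u] by (simp add: w_def a_def)
  have "eta d V' W' = 0"
  proof (rule ccontr)
    assume ne: "eta d V' W' \<noteq> 0"
    define t0 where "t0 = - eta d w V' / eta d W' V'"
    have ne': "eta d W' V' \<noteq> 0" using ne by (simp add: eta_sym)
    obtain s0 where s0: "F (a + sc s0 v) = F a + sc t0 W'" using LL(5)[OF a v] W'_def by blast
    obtain r where r: "F (p + sc s0 v) = F p + sc r V'" using LL(4)[OF p v] V'_def by blast
    have exp: "Qf d (w + sc t0 W' - sc r' V') = 2 * t0 * eta d w W' - 2 * r' * (eta d w V' + t0 * eta d W' V')" for r'
      using w W' V' by (simp add: eta_lin eta_sym[of d W' w] eta_sym[of d V' w] eta_sym[of d V' W'] algebra_simps)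
    have bracket: "eta d w V' + t0 * eta d W' V' = 0" using ne' by (simp add: t0_def)
    have "(a + sc s0 v) - (p + sc s0 v) = u" by (simp add: a_def)
    then have "Qf d ((a + sc s0 v) - (p + sc s0 v)) = 0" using u by simp
    moreover have m1: "a + sc s0 v \<in> V d" "p + sc s0 v \<in> V d" "p + sc (s0 + 1) v \<in> V d"
      using a p v by auto
    ultimately have "Qf d (F (a + sc s0 v) - F (p + sc s0 v)) = 0"
      using Flight[OF m1(1) m1(2)] by blast
    moreover have "F (a + sc s0 v) - F (p + sc s0 v) = w + sc t0 W' - sc r V'"
      using s0 r by (simp add: w_def fun_eq_iff)
    ultimately have "Qf d (w + sc t0 W' - sc r V') = 0" by simp
    then have z: "t0 * eta d w W' = 0" using exp[of r] bracket by simp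
    obtain r1 where r1: "F (p + sc (s0 + 1) v) = F p + sc r1 V'" using LL(4)[OF p v] V'_def by blast
    have "F (a + sc s0 v) - F (p + sc (s0 + 1) v) = w + sc t0 W' - sc r1 V'"
      using s0 r1 by (simp add: w_def fun_eq_iff)
    then have "Qf d (F (a + sc s0 v) - F (p + sc (s0 + 1) v)) = 0"
      using exp[of r1] bracket z by simp
    then have "Qf d ((a + sc s0 v) - (p + sc (s0 + 1) v)) = 0"
      using Flight[OF m1(1) m1(3)] by blast
    moreover have "(a + sc s0 v) - (p + sc (s0 + 1) v) = u - v"
      by (simp add: a_def fun_eq_iff algebra_simps)
    ultimately have "Qf d (u - v) = 0" by simp
    then show False using u v uv by (simp add: Qf_diff)
  qed
  then have "W' = sc (W' 0 / V' 0) V'" using N1[OF V'(1) W'(1) V'(2) W'(2) V'(3)] by simp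
  then show ?thesis by (auto simp: W'_def V'_def a_def)
qed

lemma PG:
  assumes p: "p \<in> V d" and u: "u \<in> V d" "Qf d u = 0" "u \<noteq> 0"
    and v: "v \<in> V d" "Qf d v = 0" "v \<noteq> 0" and uv: "eta d u v \<noteq> 0"
  shows "F (p + u + v) = F (p + u) + F (p + v) - F p"
proof -
  obtain c where c: "F (p + u + v) - F (p + u) = sc c (F (p + v) - F p)"
    using par_lemma[OF p u v uv] by blast
  have vu: "eta d v u \<noteq> 0" using uv by (simp add: eta_sym)
  obtain c' where c': "F (p + v + u) - F (p + v) = sc c' (F (p + u) - F p)"
    using par_lemma[OF p v u vu] by blast
  define U' where "U' = F (p + u) - F p"
  define V' where "V' = F (p + v) - F p"
  have U': "Qf d U' = 0" using LL[OF p u] by (simp add: U'_def)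
  have V': "Qf d V' = 0" using LL[OF p v] by (simp add: V'_def)
  have "Qf d ((p + u) - (p + v)) \<noteq> 0" using u v uv by (simp add: Qf_diff)
  moreover have "p + u \<in> V d" "p + v \<in> V d" using p u v by auto
  ultimately have "Qf d (F (p + u) - F (p + v)) \<noteq> 0"
    using Flight[of "p + u" "p + v"] by blast
  moreover have "F (p + u) - F (p + v) = U' - V'" by (simp add: U'_def V'_def)
  ultimately have UV: "eta d U' V' \<noteq> 0" using U' V' by (simp add: Qf_diff)
  have "p + v + u = p + u + v" by (simp add: algebra_simps)
  have e1: "F (p + u + v) = F (p + u) + sc c V'"
  proof -
    have "F (p + u + v) = F (p + u) + (F (p + u + v) - F (p + u))" by simp
    also have "\<dots> = F (p + u) + sc c V'" using c by (simp add: V'_def)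
    finally show ?thesis .
  qed
  have e2: "F (p + u + v) = F (p + v) + sc c' U'"
  proof -
    have "F (p + u + v) = F (p + v) + (F (p + v + u) - F (p + v))" by (simp add: ac_simps)
    also have "\<dots> = F (p + v) + sc c' U'" using c' by (simp add: U'_def)
    finally show ?thesis .
  qed
  have "U' + sc c V' = (F (p + u) + sc c V') - F p" by (simp add: U'_def)
  also have "\<dots> = (F (p + v) + sc c' U') - F p" using e1 e2 by simp
  also have "\<dots> = V' + sc c' U'" by (simp add: V'_def)
  finally have "U' + sc c V' = V' + sc c' U'" .
  then have "eta d U' (U' + sc c V') = eta d U' (V' + sc c' U')" by simp
  then have "c * eta d U' V' = eta d U' V'" using U' by (simp add: eta_lin)
  then have "c = 1" using UV by simp
  then show ?thesis using c by (simp add: V'_def fun_eq_iff algebra_simps)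
qed

definition Dl where "Dl p x y = F (p + x + y) - F (p + x) - F (p + y) + F p"

lemma Dl_sym: "Dl p x y = Dl p y x"
  unfolding Dl_def by (simp add: ac_simps)

lemma Dl_zero: "Dl p x 0 = 0"
  unfolding Dl_def by simp

lemma Dl_cocycle: "Dl p x (y + z) = Dl p x y + Dl (p + y) x z"
proof -
  have 1: "p + y + x + z = p + x + (y + z)" by (simp add: ac_simps)
  have 2: "p + y + x = p + x + y" by (simp add: ac_simps)
  have 3: "p + y + z = p + (y + z)" by (simp add: ac_simps)
  have 4: "p + x + y + z = p + x + (y + z)" by (simp add: ac_simps)
  show ?thesis unfolding Dl_def 1 2 3 4 by (simp add: fun_eq_iff)
qed

lemma StepA:
  assumes u: "u \<in> V d" "Qf d u = 0" "u \<noteq> 0" and y: "y \<in> V d" and p: "p \<in> V d"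
  shows "Dl p u y = 0"
proof -
  let ?G = "{y \<in> V d. \<forall>p\<in>V d. Dl p u y = 0}"
  have "V d \<subseteq> ?G"
  proof (rule NG[OF d3 _ _ u])
    show "0 \<in> ?G" using Dl_zero by simp
    show "x + y \<in> ?G" if "x \<in> ?G" "y \<in> ?G" for x y
      using that by (auto simp: Dl_cocycle)
    show "n \<in> ?G" if "n \<in> V d" "Qf d n = 0" "eta d u n \<noteq> 0" for n
    proof -
      have "n \<noteq> 0" using that by auto
      then show ?thesis using PG[OF _ u that(1,2)] that by (auto simp: Dl_def)
    qed
  qed
  then show ?thesis using y p by blast
qed

lemma StepB:
  assumes x: "x \<in> V d" and y: "y \<in> V d" and p: "p \<in> V d"
  shows "Dl p x y = 0"
proof -
  let ?G = "{y \<in> V d. \<forall>p\<in>V d. Dl p x y = 0}"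
  have np1: "np 1 \<in> V d" "Qf d (np 1) = (0::'q)" "np 1 \<noteq> (0::nat \<Rightarrow> 'q)" using d3 by auto
  have "V d \<subseteq> ?G"
  proof (rule NG[OF d3 _ _ np1])
    show "0 \<in> ?G" using Dl_zero by simp
    show "x + y \<in> ?G" if "x \<in> ?G" "y \<in> ?G" for x y
      using that by (auto simp: Dl_cocycle)
    show "n \<in> ?G" if "n \<in> V d" "Qf d n = 0" "eta d (np 1) n \<noteq> 0" for n
    proof -
      have "n \<noteq> 0" using that by auto
      then show ?thesis using StepA[OF that(1,2) _ x] that Dl_sym by auto
    qed
  qed
  then show ?thesis using y p by blast
qed

definition h where "h x = F x - F 0"

lemma h_add: "x \<in> V d \<Longrightarrow> y \<in> V d \<Longrightarrow> h (x + y) = h x + h y"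
  using StepB[of x y 0] by (simp add: h_def Dl_def fun_eq_iff algebra_simps)

lemma h_zero[simp]: "h 0 = 0" by (simp add: h_def)

lemma h_V: "x \<in> V d \<Longrightarrow> h x \<in> V d" using FV by (simp add: h_def)

lemma h_diff: "x \<in> V d \<Longrightarrow> y \<in> V d \<Longrightarrow> h (x - y) = h x - h y"
  using h_add[of "x - y" y] by simp

lemma h_uminus: "x \<in> V d \<Longrightarrow> h (- x) = - h x"
  using h_diff[of 0 x] by simp

lemma F_diff: "x \<in> V d \<Longrightarrow> y \<in> V d \<Longrightarrow> F x - F y = h (x - y)"
  using h_diff by (simp add: h_def)

lemma h_light: "x \<in> V d \<Longrightarrow> Qf d (h x) = 0 \<longleftrightarrow> Qf d x = 0"
  using Flight[of x 0] by (simp add: h_def)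

lemma h_inj: "x \<in> V d \<Longrightarrow> h x = 0 \<Longrightarrow> x = 0"
  using Finj[of x 0] by (simp add: h_def)

lemma h_sim: "x \<in> V d \<Longrightarrow> x 0 = 0 \<Longrightarrow> h x 0 = 0 \<Longrightarrow> Qf d (h x) = Qf d x"
  using Fsim[of x 0] by (simp add: h_def)

end


lemma sc_cancel:
  assumes "sc a x = sc b x" "x \<noteq> (0::nat \<Rightarrow> 'q::linordered_field)" shows "a = b"
proof -
  obtain i where "x i \<noteq> 0" using assms(2) by (auto simp: fun_eq_iff)
  moreover have "sc a x i = sc b x i" using assms(1) by simp
  then have "a * x i = b * x i" by simp
  ultimately show ?thesis by simp
qed

lemma IND:
  fixes A B C :: "nat \<Rightarrow> 'q::linordered_field"
  assumes "Qf d A = 0" "Qf d B = 0" "Qf d C = 0"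
    and AB: "eta d A B \<noteq> 0" and AC: "eta d A C \<noteq> 0" and BC: "eta d B C \<noteq> 0"
    and eq: "sc al A + sc be B + sc ga C = 0"
  shows "al = 0 \<and> be = 0 \<and> ga = 0"
proof -
  have e1: "eta d A (sc al A + sc be B + sc ga C) = al * Qf d A + be * eta d A B + ga * eta d A C"
    by (simp add: eta_lin)
  have e2: "eta d B (sc al A + sc be B + sc ga C) = al * eta d A B + be * Qf d B + ga * eta d B C"
    by (simp add: eta_lin eta_sym[of d B A])
  have e3: "eta d C (sc al A + sc be B + sc ga C) = al * eta d A C + be * eta d B C + ga * Qf d C"
    by (simp add: eta_lin eta_sym[of d C A] eta_sym[of d C B])
  have 1: "be * eta d A B + ga * eta d A C = 0" using e1 eq assms(1) by simp
  have 2: "al * eta d A B + ga * eta d B C = 0" using e2 eq assms(2) by simp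
  have 3: "al * eta d A C + be * eta d B C = 0" using e3 eq assms(3) by simp
  have "eta d A B * (al * eta d A C + be * eta d B C) = 0" using 3 by simp
  then have "(al * eta d A B) * eta d A C + (be * eta d A B) * eta d B C = 0" by (simp add: algebra_simps)
  moreover have "al * eta d A B = - ga * eta d B C" using 2 by (simp add: algebra_simps)
  moreover have "be * eta d A B = - ga * eta d A C" using 1 by (simp add: algebra_simps)
  ultimately have "- 2 * ga * (eta d B C * eta d A C) = 0" by (simp add: algebra_simps)
  then have g: "ga = 0" using AC BC by simp
  then have "be = 0" using 1 AB by simp
  moreover have "al = 0" using 2 g AB by simp
  ultimately show ?thesis using g by simp
qed

context LM
begin

lemma hline:
  assumes n: "n \<in> V d" "Qf d n = 0" "n \<noteq> 0"
  shows "\<exists>t. h (sc s n) = sc t (h n)" "\<exists>s. h (sc s n) = sc t (h n)"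
    "h n \<noteq> 0" "Qf d (h n) = 0" "h n \<in> V d"
proof -
  show "\<exists>t. h (sc s n) = sc t (h n)"
  proof -
    obtain t where "F (0 + sc s n) = F 0 + sc t (F (0 + n) - F 0)" using LL(4)[of 0 n] n by blast
    then have "h (sc s n) = sc t (h n)" by (simp add: h_def)
    then show ?thesis by blast
  qed
  show "\<exists>s. h (sc s n) = sc t (h n)"
  proof -
    obtain s where "F (0 + sc s n) = F 0 + sc t (F (0 + n) - F 0)" using LL(5)[of 0 n] n by blast
    then have "h (sc s n) = sc t (h n)" by (simp add: h_def)
    then show ?thesis by blast
  qed
  show "h n \<noteq> 0" "Qf d (h n) = 0" "h n \<in> V d" using LL(1-3)[of 0 n] n by (auto simp: h_def)
qed

definition sig where "sig n s = (THE t. h (sc s n) = sc t (h n))"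

lemma sig_eq:
  assumes n: "n \<in> V d" "Qf d n = 0" "n \<noteq> 0"
  shows "h (sc s n) = sc (sig n s) (h n)"
proof -
  obtain t where t: "h (sc s n) = sc t (h n)" using hline(1)[OF n] by blast
  have "sig n s = t" unfolding sig_def
  proof (rule the_equality)
    show "h (sc s n) = sc t (h n)" by (rule t)
    fix t' assume "h (sc s n) = sc t' (h n)"
    then show "t' = t" using t sc_cancel hline(3)[OF n] by metis
  qed
  then show ?thesis using t by simp
qed

lemma sig_surj:
  assumes n: "n \<in> V d" "Qf d n = 0" "n \<noteq> 0"
  shows "\<exists>s. sig n s = t"
proof -
  obtain s where s: "h (sc s n) = sc t (h n)" using hline(2)[OF n] by blast
  then have "sc (sig n s) (h n) = sc t (h n)" using sig_eq[OF n] by simp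
  then show ?thesis using sc_cancel hline(3)[OF n] by blast
qed

lemma sig_add:
  assumes n: "n \<in> V d" "Qf d n = 0" "n \<noteq> 0"
  shows "sig n (a + b) = sig n a + sig n b"
proof -
  have "sc (sig n (a + b)) (h n) = h (sc (a + b) n)" by (rule sig_eq[OF n, symmetric])
  also have "\<dots> = h (sc a n) + h (sc b n)" using h_add n by (simp add: add_sc)
  also have "\<dots> = sc (sig n a + sig n b) (h n)" using sig_eq[OF n] by (simp add: add_sc)
  finally have "sc (sig n (a + b)) (h n) = sc (sig n a + sig n b) (h n)" .
  then show ?thesis using sc_cancel hline(3)[OF n] by blast
qed

lemma sig_one:
  assumes n: "n \<in> V d" "Qf d n = 0" "n \<noteq> 0"
  shows "sig n 1 = 1"
  using sig_eq[OF n, of 1] sc_cancel[of "sig n 1" "h n" 1] hline(3)[OF n] by simp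

lemma sig_zero:
  assumes n: "n \<in> V d" "Qf d n = 0" "n \<noteq> 0"
  shows "sig n 0 = 0"
  using sig_add[OF n, of 0 0] by simp

lemma h_eta_ne:
  assumes "x \<in> V d" "y \<in> V d" "Qf d x = 0" "Qf d y = 0" "Qf d (x - y) \<noteq> 0"
  shows "eta d (h x) (h y) \<noteq> 0"
proof -
  have "Qf d (h (x - y)) \<noteq> 0" using h_light assms by simp
  then have "Qf d (h x - h y) \<noteq> 0" using h_diff assms by simp
  moreover have "Qf d (h x) = 0" "Qf d (h y) = 0" using h_light assms by auto
  ultimately show ?thesis by (simp add: Qf_diff)
qed

lemma sig_pair:
  assumes i: "1 \<le> i" "i < d" and j: "1 \<le> j" "j < d" and ij: "i \<noteq> j"
  shows "sig (np i) s = sig (nm j) s \<and> sig (nm i) s = sig (nm j) s \<and> sig (np j) s = sig (nm j) s"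
proof -
  have nul: "(np i :: nat \<Rightarrow> 'q) \<in> V d" "Qf d (np i :: nat \<Rightarrow> 'q) = 0" "(np i :: nat \<Rightarrow> 'q) \<noteq> 0"
    "(nm i :: nat \<Rightarrow> 'q) \<in> V d" "Qf d (nm i :: nat \<Rightarrow> 'q) = 0" "(nm i :: nat \<Rightarrow> 'q) \<noteq> 0"
    "(np j :: nat \<Rightarrow> 'q) \<in> V d" "Qf d (np j :: nat \<Rightarrow> 'q) = 0" "(np j :: nat \<Rightarrow> 'q) \<noteq> 0"
    "(nm j :: nat \<Rightarrow> 'q) \<in> V d" "Qf d (nm j :: nat \<Rightarrow> 'q) = 0" "(nm j :: nat \<Rightarrow> 'q) \<noteq> 0" using i j by simp_all
  define A where "A = h (np i)"
  define B where "B = h (nm i)"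
  define C where "C = h (np j)"
  define D where "D = h (nm j)"
  have QA: "Qf d A = 0" "Qf d B = 0" "Qf d C = 0" using nul h_light[of "np i"] h_light[of "nm i"] h_light[of "np j"]
    by (simp_all add: A_def B_def C_def)
  have "(np i - nm i :: nat \<Rightarrow> 'q) = sc 2 (ee i)" by (simp add: np_def nm_def fun_eq_iff)
  then have q1: "Qf d (np i - nm i :: nat \<Rightarrow> 'q) \<noteq> 0" using i j ij
    by (simp add: Qf_sc eta_ee2)
  have q2: "Qf d (np i - np j :: nat \<Rightarrow> 'q) \<noteq> 0" using i j ij
    by (simp add: np_def nm_def eta_lin eta_ee1 eta_ee2)
  have q3: "Qf d (nm i - np j :: nat \<Rightarrow> 'q) \<noteq> 0" using i j ij
    by (simp add: np_def nm_def eta_lin eta_ee1 eta_ee2)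
  have AB: "eta d A B \<noteq> 0" using h_eta_ne[OF nul(1) nul(4) nul(2) nul(5) q1] by (simp add: A_def B_def)
  have AC: "eta d A C \<noteq> 0" using h_eta_ne[OF nul(1) nul(7) nul(2) nul(8) q2] by (simp add: A_def C_def)
  have BC: "eta d B C \<noteq> 0" using h_eta_ne[OF nul(4) nul(7) nul(5) nul(8) q3] by (simp add: B_def C_def)
  have sum: "np i + nm i = (np j + nm j :: nat \<Rightarrow> 'q)" by (simp add: np_def nm_def fun_eq_iff)
  have DD: "D = A + B - C"
  proof -
    have "h (np i + nm i) = h (np j + nm j)" using sum by simp
    then have "A + B = C + D" using h_add nul by (simp add: A_def B_def C_def D_def)
    then show ?thesis by (simp add: algebra_simps)
  qed
  define a where "a = sig (np i) s"
  define b where "b = sig (nm i) s"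
  define c where "c = sig (np j) s"
  define e where "e = sig (nm j) s"
  have "h (sc s (np i)) + h (sc s (nm i)) = h (sc s (np i + nm i))"
    using h_add nul by (simp add: sc_add)
  also have "\<dots> = h (sc s (np j + nm j))" using sum by simp
  also have "\<dots> = h (sc s (np j)) + h (sc s (nm j))" using h_add nul by (simp add: sc_add)
  finally have "sc a A + sc b B = sc c C + sc e D"
    using sig_eq nul by (simp add: a_def b_def c_def e_def A_def B_def C_def D_def)
  then have E: "a * A k + b * B k = c * C k + e * (A k + B k - C k)" for k
    using DD by (simp add: fun_eq_iff)
  have "sc (a - e) A + sc (b - e) B + sc (e - c) C = 0"
  proof (rule ext)
    fix k
    show "(sc (a - e) A + sc (b - e) B + sc (e - c) C) k = 0 k"
      using E[of k] by (simp add: algebra_simps)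
  qed
  then have "a - e = 0 \<and> b - e = 0 \<and> e - c = 0" using IND[OF QA AB AC BC] by blast
  then show ?thesis by (simp add: a_def b_def c_def e_def)
qed

definition sg where "sg = sig (np 1)"

lemma sig_common:
  assumes i: "1 \<le> i" "i < d"
  shows "sig (np i) = sg" "sig (nm i) = sg"
proof -
  have "sig (np i) s = sg s \<and> sig (nm i) s = sg s" for s
  proof (cases "i = 1")
    case True
    then show ?thesis using sig_pair[of 1 2 s] d3 by (simp add: sg_def)
  next
    case False
    then show ?thesis using sig_pair[of i 1 s] d3 i by (simp add: sg_def)
  qed
  then show "sig (np i) = sg" "sig (nm i) = sg" by (auto simp: fun_eq_iff)
qed

lemma nulls:
  assumes "1 \<le> i" "i < d"
  shows "(np i :: nat \<Rightarrow> 'q) \<in> V d" "Qf d (np i :: nat \<Rightarrow> 'q) = 0" "(np i :: nat \<Rightarrow> 'q) \<noteq> 0"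
    "(nm i :: nat \<Rightarrow> 'q) \<in> V d" "Qf d (nm i :: nat \<Rightarrow> 'q) = 0" "(nm i :: nat \<Rightarrow> 'q) \<noteq> 0"
  using assms by simp_all

lemma sg_add: "sg (a + b) = sg a + sg b"
  using sig_add[OF nulls(1-3)[of 1]] d3 by (simp add: sg_def)
lemma sg_one: "sg 1 = 1"
  using sig_one[OF nulls(1-3)[of 1]] d3 by (simp add: sg_def)
lemma sg_zero: "sg 0 = 0"
  using sig_zero[OF nulls(1-3)[of 1]] d3 by (simp add: sg_def)
lemma sg_neg: "sg (- a) = - sg a"
  using sg_add[of a "-a"] sg_zero by (simp add: eq_neg_iff_add_eq_0)
lemma sg_diff: "sg (a - b) = sg a - sg b"
  using sg_add[of "a - b" b] by simp
lemma sg_surj: "\<exists>s. sg s = t"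
  using sig_surj[OF nulls(1-3)[of 1]] d3 by (simp add: sg_def)
lemma h_np: "1 \<le> i \<Longrightarrow> i < d \<Longrightarrow> h (sc s (np i)) = sc (sg s) (h (np i))"
  using sig_eq[OF nulls(1-3)] sig_common by simp
lemma h_nm: "1 \<le> i \<Longrightarrow> i < d \<Longrightarrow> h (sc s (nm i)) = sc (sg s) (h (nm i))"
  using sig_eq[OF nulls(4-6)] sig_common by simp

lemma sg_sq: "sg (t * t) = sg t * sg t"
proof -
  define A where "A = h (np 1)"
  define B where "B = h (nm 1)"
  define C where "C = h (np 2)"
  define D where "D = h (nm 2)"
  have n1: "1 \<le> (1::nat)" "1 < d" and n2: "1 \<le> (2::nat)" "2 < d" using d3 by auto
  note N1 = nulls[OF n1] and N2 = nulls[OF n2]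
  have QA: "Qf d A = 0" "Qf d B = 0" using N1 h_light by (auto simp: A_def B_def)
  have "(np 1 - nm 1 :: nat \<Rightarrow> 'q) = sc 2 (ee 1)" by (simp add: np_def nm_def fun_eq_iff)
  then have q1: "Qf d (np 1 - nm 1 :: nat \<Rightarrow> 'q) \<noteq> 0" using d3 by (simp add: Qf_sc eta_ee2)
  have AB: "eta d A B \<noteq> 0" using h_eta_ne[OF N1(1) N1(4) N1(2) N1(5) q1] by (simp add: A_def B_def)
  have sum: "np 1 + nm 1 = (np 2 + nm 2 :: nat \<Rightarrow> 'q)" by (simp add: np_def nm_def fun_eq_iff)
  have ABCD: "A + B = C + D"
  proof -
    have "h (np 1 + nm 1) = h (np 2 + nm 2)" using sum by simp
    then show ?thesis using h_add N1 N2 by (simp add: A_def B_def C_def D_def)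
  qed
  have QC: "Qf d C = 0" "Qf d D = 0" using N2 h_light by (auto simp: C_def D_def)
  have "Qf d (A + B) = Qf d (C + D)" using ABCD by simp
  then have kap: "eta d C D = eta d A B" using QA QC by (simp add: Qf_add)
  have QY: "Qf d (C - D) = - 2 * eta d A B" using QC kap by (simp add: Qf_diff)
  have key: "Qf d (A + sc (sg (t * t)) B + sc u (C - D)) = 0" if "u = sg t \<or> u = - sg t" for u
  proof -
    define t' where "t' = (if u = sg t then t else - t)"
    have u: "u = sg t'" using that by (auto simp: t'_def sg_neg)
    have tt: "t' * t' = t * t" by (simp add: t'_def)
    define w where "w = np 1 + sc (t' * t') (nm 1) + sc t' (np 2 - nm 2 :: nat \<Rightarrow> 'q)"
    have w: "w \<in> V d" using N1 N2 by (simp add: w_def)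
    have "w = sc (1 + t' * t') (ee 0) + sc (1 - t' * t') (ee 1) + sc (2 * t') (ee 2)"
      by (auto simp: w_def np_def nm_def fun_eq_iff algebra_simps)
    then have "Qf d w = 0" using d3 by (simp add: eta_lin eta_ee2 algebra_simps)
    then have "Qf d (h w) = 0" using h_light w by simp
    moreover have "h w = A + sc (sg (t * t)) B + sc u (C - D)"
    proof -
      have "h w = h (np 1) + h (sc (t' * t') (nm 1)) + h (sc t' (np 2) - sc t' (nm 2))"
        using h_add N1 N2 by (simp add: w_def sc_diff)
      also have "\<dots> = A + sc (sg (t * t)) B + sc u (C - D)"
        using h_diff h_np h_nm N1 N2 n1 n2 tt u by (simp add: A_def B_def C_def D_def sc_diff)
      finally show ?thesis .
    qed
    ultimately show ?thesis by simp
  qed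
  define a where "a = sg (t * t)"
  define b where "b = sg t"
  have ex: "Qf d (A + sc a B + sc u (C - D)) = 2 * a * eta d A B + 2 * u * eta d A (C - D)
     + 2 * a * u * eta d B (C - D) + u * u * Qf d (C - D)" for u
    using QA by (simp add: eta_lin eta_sym[of d B A] eta_sym[of d "C - D" A] eta_sym[of d "C - D" B]
        eta_sym[of d D A] eta_sym[of d D B] eta_sym[of d C A] eta_sym[of d C B] algebra_simps)
  have "2 * a * eta d A B + 2 * b * eta d A (C - D) + 2 * a * b * eta d B (C - D) + b * b * Qf d (C - D) = 0"
    using key[of b] ex[of b] by (simp add: a_def b_def)
  moreover have "2 * a * eta d A B + 2 * (-b) * eta d A (C - D) + 2 * a * (-b) * eta d B (C - D) + (-b) * (-b) * Qf d (C - D) = 0"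
    using key[of "-b"] ex[of "-b"] by (simp add: a_def b_def)
  ultimately have "4 * a * eta d A B + 2 * b * b * Qf d (C - D) = 0" by (simp add: algebra_simps)
  then have "4 * (a - b * b) * eta d A B = 0" using QY by (simp add: algebra_simps)
  then show ?thesis using AB by (simp add: a_def b_def)
qed

lemma sg_mult: "sg (s * t) = sg s * sg t"
proof -
  have a1: "sg ((s + t) * (s + t)) = (sg s + sg t) * (sg s + sg t)" by (simp only: sg_sq sg_add)
  have a2: "sg ((s - t) * (s - t)) = (sg s - sg t) * (sg s - sg t)" by (simp only: sg_sq sg_diff)
  have 1: "sg ((s + t) * (s + t)) - sg ((s - t) * (s - t)) = 4 * (sg s * sg t)"
    unfolding a1 a2 by (simp add: algebra_simps)
  have 2: "sg ((s + t) * (s + t)) - sg ((s - t) * (s - t)) = sg ((s + t) * (s + t) - (s - t) * (s - t))"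
    by (simp only: sg_diff)
  have 3: "(s + t) * (s + t) - (s - t) * (s - t) = (s * t) + (s * t) + (s * t) + (s * t)"
    by (simp add: algebra_simps)
  have "sg ((s * t) + (s * t) + (s * t) + (s * t)) = 4 * (sg s * sg t)" using 1 2 3 by simp
  then have "4 * sg (s * t) = 4 * (sg s * sg t)" by (simp only: sg_add)
  then show ?thesis by simp
qed

end


context LM
begin

lemma semilin: "x \<in> V d \<Longrightarrow> h (sc c x) = sc (sg c) (h x)"
proof -
  let ?G = "{x \<in> V d. \<forall>c. h (sc c x) = sc (sg c) (h x)}"
  have G0: "0 \<in> ?G" by simp
  have Gadd: "x + y \<in> ?G" if "x \<in> ?G" "y \<in> ?G" for x y
    using that h_add by (simp add: sc_add)
  have Gsc: "sc a x \<in> ?G" if "x \<in> ?G" for x a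
    using that by (simp add: sc_sc sg_mult mult.commute)
  have Gnp: "np i \<in> ?G" "nm i \<in> ?G" if "1 \<le> i" "i < d" for i
    using that h_np h_nm by auto
  have "sc c (ee i) \<in> ?G" if "i < d" for i c
  proof (cases "i = 0")
    case True
    have eq: "ee 0 = sc (1/2) (np 1 + nm 1 :: nat \<Rightarrow> 'q)" by (auto simp: fun_eq_iff np_def nm_def)
    have "np 1 + nm 1 \<in> ?G" using Gnp[of 1] d3 by (intro Gadd) auto
    then have "sc (1/2) (np 1 + nm 1) \<in> ?G" by (rule Gsc)
    then have "ee 0 \<in> ?G" unfolding eq .
    then have "sc c (ee 0) \<in> ?G" by (rule Gsc)
    then show ?thesis using True by simp
  next
    case False
    then have i: "1 \<le> i" "i < d" using that by auto
    have eq: "ee i = sc (1/2) (np i + sc (-1) (nm i) :: nat \<Rightarrow> 'q)" using i by (auto simp: fun_eq_iff np_def nm_def)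
    have "np i + sc (-1) (nm i) \<in> ?G" using Gnp[OF i] by (intro Gadd Gsc) auto
    then have "sc (1/2) (np i + sc (-1) (nm i)) \<in> ?G" by (rule Gsc)
    then have "ee i \<in> ?G" unfolding eq .
    then show ?thesis by (rule Gsc)
  qed
  then have "V d \<subseteq> ?G" using span_V[of ?G d] G0 Gadd by blast
  then show "x \<in> V d \<Longrightarrow> h (sc c x) = sc (sg c) (h x)" by blast
qed

lemma Selem: "\<exists>x. x \<in> V d \<and> x 0 = 0 \<and> x \<noteq> 0 \<and> h x 0 = 0"
proof -
  define a1 where "a1 = h (ee 1) 0"
  define a2 where "a2 = h (ee 2) 0"
  have e1: "(ee 1 :: nat \<Rightarrow> 'q) \<in> V d" and e2: "(ee 2 :: nat \<Rightarrow> 'q) \<in> V d" using d3 by auto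
  show ?thesis
  proof (cases "a1 = 0")
    case True
    then show ?thesis using e1 by (auto simp: a1_def fun_eq_iff intro!: exI[of _ "ee 1"])
  next
    case False
    obtain al where al: "sg al = a2" using sg_surj by blast
    obtain be where be: "sg be = - a1" using sg_surj by blast
    have "be \<noteq> 0" using be False sg_zero by auto
    define x where "x = sc al (ee 1) + sc be (ee 2)"
    have "x \<in> V d" using e1 e2 by (simp add: x_def)
    moreover have "x 0 = 0" by (simp add: x_def)
    moreover have "x \<noteq> 0"
    proof
      assume "x = 0"
      then have "x 2 = 0" by simp
      then show False using \<open>be \<noteq> 0\<close> by (simp add: x_def)
    qed
    moreover have "h x 0 = 0"
    proof -
      have "h x = sc (sg al) (h (ee 1)) + sc (sg be) (h (ee 2))"
        using h_add semilin e1 e2 by (simp add: x_def)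
      then show ?thesis using al be by (simp add: a1_def a2_def)
    qed
    ultimately show ?thesis by blast
  qed
qed

lemma sg_id: "sg t = t"
proof -
  obtain x where x: "x \<in> V d" "x 0 = 0" "x \<noteq> 0" "h x 0 = 0" using Selem by blast
  have Qx: "Qf d x \<noteq> 0" using N0' x by fastforce
  have sq: "sg s * sg s = s * s" for s
  proof -
    have "h (sc s x) = sc (sg s) (h x)" using semilin x by simp
    then have "h (sc s x) 0 = 0" using x by simp
    then have "Qf d (h (sc s x)) = Qf d (sc s x)" using h_sim x by simp
    then have "sg s * sg s * Qf d (h x) = s * s * Qf d x" using semilin x by (simp add: Qf_sc)
    moreover have "Qf d (h x) = Qf d x" using h_sim x by simp
    ultimately show ?thesis using Qx by simp
  qed
  have "(sg t + 1) * (sg t + 1) = (t + 1) * (t + 1)" using sq[of "t + 1"] sg_add sg_one by simp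
  then have "sg t * sg t + 2 * sg t = t * t + 2 * t" by (simp add: algebra_simps)
  then show ?thesis using sq[of t] by simp
qed

lemma hlin: "x \<in> V d \<Longrightarrow> h (sc c x) = sc c (h x)"
  using semilin sg_id by simp

definition mu where "mu = Qf d (h (ee 0))"

lemma eV: "i < d \<Longrightarrow> (ee i :: nat \<Rightarrow> 'q) \<in> V d" by simp

lemma c1:
  assumes i: "1 \<le> i" "i < d"
  shows "eta d (h (ee 0)) (h (ee i)) = 0" "Qf d (h (ee i)) = - mu"
proof -
  have e0: "(ee 0 :: nat \<Rightarrow> 'q) \<in> V d" using d3 by simp
  have ei: "(ee i :: nat \<Rightarrow> 'q) \<in> V d" using i by simp
  have "Qf d (h (np i)) = 0" using nulls[OF i] h_light by simp
  moreover have "h (np i) = h (ee 0) + h (ee i)" using h_add e0 ei by (simp add: np_def)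
  ultimately have 1: "mu + 2 * eta d (h (ee 0)) (h (ee i)) + Qf d (h (ee i)) = 0"
    by (simp add: Qf_add mu_def)
  have "Qf d (h (nm i)) = 0" using nulls[OF i] h_light by simp
  moreover have "h (nm i) = h (ee 0) - h (ee i)" using h_diff e0 ei by (simp add: nm_def)
  ultimately have 2: "mu - 2 * eta d (h (ee 0)) (h (ee i)) + Qf d (h (ee i)) = 0"
    by (simp add: Qf_diff mu_def)
  from 1 2 show "eta d (h (ee 0)) (h (ee i)) = 0" "Qf d (h (ee i)) = - mu"
    by (simp_all add: algebra_simps)
qed

lemma c2:
  assumes i: "1 \<le> i" "i < d" and j: "1 \<le> j" "j < d" and ij: "i \<noteq> j"
  shows "eta d (h (ee i)) (h (ee j)) = 0"
proof -
  have e0: "(ee 0 :: nat \<Rightarrow> 'q) \<in> V d" using d3 by simp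
  have ei: "(ee i :: nat \<Rightarrow> 'q) \<in> V d" using i by simp
  have ej: "(ee j :: nat \<Rightarrow> 'q) \<in> V d" using j by simp
  define w where "w = sc 5 (ee 0) + sc 3 (ee i) + sc 4 (ee j :: nat \<Rightarrow> 'q)"
  have w: "w \<in> V d" using e0 ei ej by (simp add: w_def)
  have "Qf d w = 0" using i j ij by (simp add: w_def eta_lin eta_ee2)
  then have "Qf d (h w) = 0" using h_light w by simp
  moreover have "h w = sc 5 (h (ee 0)) + sc 3 (h (ee i)) + sc 4 (h (ee j))"
    using h_add hlin e0 ei ej by (simp add: w_def)
  ultimately have "Qf d (sc 5 (h (ee 0)) + sc 3 (h (ee i)) + sc 4 (h (ee j))) = 0" by simp
  then have "25 * mu + 9 * Qf d (h (ee i)) + 16 * Qf d (h (ee j))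
      + 30 * eta d (h (ee 0)) (h (ee i)) + 40 * eta d (h (ee 0)) (h (ee j))
      + 24 * eta d (h (ee i)) (h (ee j)) = 0"
    by (simp add: eta_lin mu_def eta_sym[of d "h (ee i)" "h (ee 0)"] eta_sym[of d "h (ee j)" "h (ee 0)"]
        eta_sym[of d "h (ee j)" "h (ee i)"] algebra_simps)
  then show ?thesis using c1[OF i] c1[OF j] by simp
qed

lemma c3:
  assumes "a < d" "b < d"
  shows "eta d (h (ee a)) (h (ee b)) = mu * eta d (ee a) (ee b)"
proof -
  have E: "eta d (ee a) (ee b :: nat \<Rightarrow> 'q) = (if a = b then (if a = 0 then 1 else -1) else 0)"
    using assms by (simp add: eta_ee2)
  consider "a = 0" "b = 0" | "a = 0" "b \<noteq> 0" | "a \<noteq> 0" "b = 0" | "a \<noteq> 0" "b \<noteq> 0" "a = b"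
    | "a \<noteq> 0" "b \<noteq> 0" "a \<noteq> b" by blast
  then show ?thesis
  proof cases
    case 1 then show ?thesis unfolding E by (simp add: mu_def)
  next
    case 2
    have "eta d (h (ee 0)) (h (ee b)) = 0" using c1(1)[of b] assms 2 by simp
    then show ?thesis unfolding E using 2 by simp
  next
    case 3
    have "eta d (h (ee 0)) (h (ee a)) = 0" using c1(1)[of a] assms 3 by simp
    then have "eta d (h (ee a)) (h (ee 0)) = 0" using eta_sym by metis
    then show ?thesis unfolding E using 3 by simp
  next
    case 4
    have "Qf d (h (ee a)) = - mu" using c1(2)[of a] assms 4 by simp
    then show ?thesis unfolding E using 4 by simp
  next
    case 5
    have "eta d (h (ee a)) (h (ee b)) = 0" using c2[of a b] assms 5 by simp
    then show ?thesis unfolding E using 5 by simp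
  qed
qed

lemma c4: "x \<in> V d \<Longrightarrow> y \<in> V d \<Longrightarrow> eta d (h x) (h y) = mu * eta d x y"
proof -
  let ?G1 = "{y \<in> V d. \<forall>a<d. eta d (h (ee a)) (h y) = mu * eta d (ee a) y}"
  have "V d \<subseteq> ?G1"
  proof (rule span_V)
    show "0 \<in> ?G1" by simp
    show "x + y \<in> ?G1" if "x \<in> ?G1" "y \<in> ?G1" for x y
      using that h_add by (simp add: eta_lin algebra_simps)
    show "sc c (ee i) \<in> ?G1" if "i < d" for i c
      using that hlin c3 by (simp add: eta_lin)
  qed
  let ?G2 = "{x \<in> V d. \<forall>y\<in>V d. eta d (h x) (h y) = mu * eta d x y}"
  have "V d \<subseteq> ?G2"
  proof (rule span_V)
    show "0 \<in> ?G2" by simp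
    show "x + y \<in> ?G2" if "x \<in> ?G2" "y \<in> ?G2" for x y
      using that h_add by (simp add: eta_lin algebra_simps)
    show "sc c (ee i) \<in> ?G2" if "i < d" for i c
      using that hlin \<open>V d \<subseteq> ?G1\<close> by (auto simp: eta_lin)
  qed
  then show "x \<in> V d \<Longrightarrow> y \<in> V d \<Longrightarrow> eta d (h x) (h y) = mu * eta d x y" by blast
qed

lemma mu1: "mu = 1"
proof -
  obtain x where x: "x \<in> V d" "x 0 = 0" "x \<noteq> 0" "h x 0 = 0" using Selem by blast
  have Qx: "Qf d x \<noteq> 0" using N0' x by fastforce
  have "Qf d (h x) = Qf d x" using h_sim x by simp
  then show ?thesis using c4[OF x(1) x(1)] Qx by simp
qed

theorem F_isometry: "x \<in> V d \<Longrightarrow> y \<in> V d \<Longrightarrow> Qf d (F x - F y) = Qf d (x - y)"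
  using F_diff c4 mu1 by simp

end


definition vec :: "'q::linordered_field list \<Rightarrow> nat \<Rightarrow> 'q" where
  "vec p = (\<lambda>i. if i < length p then p ! i else 0)"

definition lst :: "nat \<Rightarrow> (nat \<Rightarrow> 'q::linordered_field) \<Rightarrow> 'q list" where
  "lst d x = map x [0..<d]"

lemma vec_V: "length p = d \<Longrightarrow> vec p \<in> V d" by (simp add: vec_def V_def)
lemma lst_len[simp]: "length (lst d x) = d" by (simp add: lst_def)
lemma vec_lst: "x \<in> V d \<Longrightarrow> vec (lst d x) = x" by (auto simp: vec_def lst_def V_def fun_eq_iff)
lemma lst_vec: "length p = d \<Longrightarrow> lst d (vec p) = p" by (auto simp: vec_def lst_def intro: nth_equalityI)
lemma vec_inj: "length p = d \<Longrightarrow> length q = d \<Longrightarrow> vec p = vec q \<Longrightarrow> p = q"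
  using lst_vec by metis
lemma hd_vec: "length p \<ge> 1 \<Longrightarrow> hd p = vec p 0" by (cases p) (auto simp: vec_def)

lemma sumsq:
  fixes p q :: "'q::linordered_field list"
  assumes "length p = d" "length q = d" "1 \<le> d"
  shows "sum_list (map (\<lambda>x. x ^ 2) (vsub (tl p) (tl q))) = (\<Sum>i\<in>{1..<d}. (vec p i - vec q i) * (vec p i - vec q i))"
proof -
  have L: "length (vsub (tl p) (tl q)) = d - 1" using assms by (simp add: vsub_def)
  have "sum_list (map (\<lambda>x. x ^ 2) (vsub (tl p) (tl q))) = (\<Sum>i = 0..<d - 1. (vsub (tl p) (tl q) ! i) ^ 2)"
    by (simp add: sum_list_sum_nth L)
  also have "\<dots> = (\<Sum>i = 0..<d - 1. (vec p (Suc i) - vec q (Suc i)) * (vec p (Suc i) - vec q (Suc i)))"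
    using assms by (intro sum.cong) (auto simp: vsub_def vec_def nth_tl power2_eq_square)
  also have "\<dots> = (\<Sum>i = Suc 0..<Suc (d - 1). (vec p i - vec q i) * (vec p i - vec q i))"
    by (rule sum.shift_bounds_Suc_ivl[symmetric])
  also have "Suc (d - 1) = d" using assms by simp
  finally show ?thesis by simp
qed

lemma Qf_vec:
  fixes p q :: "'q::linordered_field list"
  assumes "length p = d" "length q = d" "1 \<le> d"
  shows "Qf d (vec p - vec q) = (hd p - hd q)^2 - sum_list (map (\<lambda>x. x ^ 2) (vsub (tl p) (tl q)))"
proof -
  have "Qf d (vec p - vec q) = (vec p 0 - vec q 0) * (vec p 0 - vec q 0)
     - (\<Sum>i\<in>{1..<d}. (vec p i - vec q i) * (vec p i - vec q i))" by (simp add: eta_def)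
  also have "\<dots> = (hd p - hd q)^2 - sum_list (map (\<lambda>x. x ^ 2) (vsub (tl p) (tl q)))"
    unfolding sumsq[OF assms] using assms by (simp add: hd_vec power2_eq_square)
  finally show ?thesis .
qed

lemma sumsq_nonneg: "0 \<le> sum_list (map (\<lambda>x. x ^ 2) (xs :: 'q::linordered_field list))"
  by (induction xs) auto

lemma esqrt_prop:
  assumes eof: "AxEOF TYPE('q::linordered_field)" and s: "0 \<le> (s::'q)"
  shows "0 \<le> esqrt s \<and> esqrt s * esqrt s = s"
proof -
  obtain y where y: "0 \<le> y" "y * y = s"
  proof (cases "s = 0")
    case True then show ?thesis using that by simp
  next
    case False
    then obtain z where "z * z = s" using eof s unfolding AxEOF_def by force
    then show ?thesis using that[of "\<bar>z\<bar>"] by (simp add: abs_mult_self_eq)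
  qed
  have "esqrt s = y" unfolding esqrt_def
  proof (rule the_equality)
    show "0 \<le> y \<and> y * y = s" using y by simp
    fix z assume "0 \<le> z \<and> z * z = s"
    then show "z = y" using y power2_eq_iff_nonneg[of z y] by (simp add: power2_eq_square)
  qed
  then show ?thesis using y by simp
qed

lemma elen_light:
  fixes p q :: "'q::linordered_field list"
  assumes eof: "AxEOF TYPE('q)" and "length p = d" "length q = d" "1 \<le> d"
  shows "elen (vsub (tl p) (tl q)) = \<bar>hd p - hd q\<bar> \<longleftrightarrow> Qf d (vec p - vec q) = 0"
proof -
  define S where "S = sum_list (map (\<lambda>x. x ^ 2) (vsub (tl p) (tl q)))"
  have S0: "0 \<le> S" by (simp add: S_def sumsq_nonneg)
  have e: "0 \<le> esqrt S" "esqrt S * esqrt S = S" using esqrt_prop[OF eof S0] by auto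
  have "esqrt S = \<bar>hd p - hd q\<bar> \<longleftrightarrow> S = (hd p - hd q)^2"
  proof
    assume "esqrt S = \<bar>hd p - hd q\<bar>"
    then show "S = (hd p - hd q)^2" using e by (metis abs_mult_self_eq power2_eq_square)
  next
    assume "S = (hd p - hd q)^2"
    then have "esqrt S * esqrt S = \<bar>hd p - hd q\<bar> * \<bar>hd p - hd q\<bar>" using e by (simp add: power2_eq_square)
    then show "esqrt S = \<bar>hd p - hd q\<bar>" using e power2_eq_iff_nonneg[of "esqrt S" "\<bar>hd p - hd q\<bar>"]
      by (simp add: power2_eq_square)
  qed
  then show ?thesis using Qf_vec[OF assms(2-4)] by (auto simp: elen_def S_def[symmetric])
qed

lemma dist_sq:
  fixes xs :: "'q::linordered_field list"
  assumes eof: "AxEOF TYPE('q)"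
  shows "(elen xs)^2 = sum_list (map (\<lambda>x. x ^ 2) xs)"
  using esqrt_prop[OF eof sumsq_nonneg[of xs]] by (simp add: elen_def power2_eq_square)

locale Model =
  fixes d :: nat and Ob IOb Ph :: "'b set" and W :: "'b \<Rightarrow> 'b \<Rightarrow> 'q::linordered_field list \<Rightarrow> bool"
  assumes d3: "3 \<le> d" and SR: "SpecRel d Ob IOb Ph W"
begin

lemma eof: "AxEOF TYPE('q)" using SR by (simp add: SpecRel_def)
lemma ph0: "AxPh0 d IOb Ph W" using SR by (simp add: SpecRel_def)
lemma aev: "AxEv d IOb W" using SR by (simp add: SpecRel_def)
lemma asd: "AxSimDist d IOb W" using SR by (simp add: SpecRel_def)

lemma light_iff:
  assumes "m \<in> IOb" "length p = d" "length q = d"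
  shows "Ph \<inter> ev W m p \<inter> ev W m q \<noteq> {} \<longleftrightarrow> Qf d (vec p - vec q) = 0"
  using ph0 assms elen_light[OF eof assms(2,3)] d3 unfolding AxPh0_def by auto

lemma ev_ne: "m \<in> IOb \<Longrightarrow> length p = d \<Longrightarrow> ev W m p \<noteq> {}"
  using light_iff[of m p p] by auto

lemma Cd_eq: "m \<in> IOb \<Longrightarrow> Cd d W m = {p. length p = d}"
  using ev_ne by (auto simp: Cd_def)

lemma ev_inj:
  assumes m: "m \<in> IOb" and p: "length p = d" and q: "length q = d" and e: "ev W m p = ev W m q"
  shows "p = q"
proof -
  have "vec p = vec q"
  proof (rule LC[of d])
    show "2 \<le> d" using d3 by simp
    show "vec p \<in> V d" "vec q \<in> V d" using vec_V[OF p] vec_V[OF q] by auto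
    fix z :: "nat \<Rightarrow> 'q" assume z: "z \<in> V d"
    define r where "r = lst d z"
    have r: "length r = d" "vec r = z" using z vec_lst by (auto simp: r_def)
    show "Qf d (vec p - z) = 0 \<longleftrightarrow> Qf d (vec q - z) = 0"
      using light_iff[OF m p r(1)] light_iff[OF m q r(1)] e r(2) by simp
  qed
  then show ?thesis using vec_inj p q by blast
qed

lemma hc:
  assumes m: "m \<in> IOb" and p: "length p = d"
  shows "has_crd d W m (ev W m p)" "Crd d W m (ev W m p) = p"
proof -
  have u: "\<And>q. q \<in> Cd d W m \<and> ev W m q = ev W m p \<Longrightarrow> q = p"
    using ev_inj[OF m] p Cd_eq[OF m] by auto
  have pc: "p \<in> Cd d W m \<and> ev W m p = ev W m p" using Cd_eq[OF m] p by simp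
  show "has_crd d W m (ev W m p)" unfolding has_crd_def using u pc by blast
  show "Crd d W m (ev W m p) = p" unfolding Crd_def using u pc by (rule the_equality[rotated]) 
qed

lemma Evm_eq: "m \<in> IOb \<Longrightarrow> Evm d W m = {ev W m p | p. length p = d}"
  using Cd_eq by (auto simp: Evm_def)

definition fm where "fm m k p = (THE q. length q = d \<and> ev W k q = ev W m p)"

lemma fm_prop:
  assumes m: "m \<in> IOb" and k: "k \<in> IOb" and p: "length p = d"
  shows "length (fm m k p) = d" "ev W k (fm m k p) = ev W m p"
proof -
  have "ev W m p \<in> Evm d W k" using aev m k p Evm_eq[OF m] unfolding AxEv_def by blast
  then obtain q where q: "length q = d" "ev W k q = ev W m p" using Evm_eq[OF k] by auto
  have "fm m k p = q" unfolding fm_def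
  proof (rule the_equality)
    show "length q = d \<and> ev W k q = ev W m p" using q by simp
    fix q' assume "length q' = d \<and> ev W k q' = ev W m p"
    then show "q' = q" using ev_inj[OF k] q by auto
  qed
  then show "length (fm m k p) = d" "ev W k (fm m k p) = ev W m p" using q by auto
qed

definition FF where "FF m k x = vec (fm m k (lst d x))"

lemma LM_inst:
  assumes m: "m \<in> IOb" and k: "k \<in> IOb"
  shows "LM d (FF m k)"
proof
  show "3 \<le> d" by (rule d3)
  show "FF m k x \<in> V d" if "x \<in> V d" for x
  proof -
    have "length (fm m k (lst d x)) = d" using fm_prop[OF m k] by simp
    then show ?thesis unfolding FF_def by (rule vec_V)
  qed
  show "\<exists>x\<in>V d. FF m k x = y" if y: "y \<in> V d" for y
  proof -
    define q where "q = lst d y"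
    have q: "length q = d" by (simp add: q_def)
    have ev: "Evm d W m = Evm d W k" using aev m k unfolding AxEv_def by blast
    have "ev W k q \<in> Evm d W k" using Evm_eq[OF k] q by blast
    then have "ev W k q \<in> Evm d W m" using ev by simp
    then obtain p where p: "length p = d" "ev W m p = ev W k q" using Evm_eq[OF m] by blast
    have "ev W k (fm m k p) = ev W k q" using fm_prop(2)[OF m k p(1)] p(2) by simp
    then have "fm m k p = q" using ev_inj[OF k fm_prop(1)[OF m k p(1)] q] by blast
    then have "FF m k (vec p) = vec q" using lst_vec[OF p(1)] by (simp add: FF_def)
    also have "vec q = y" unfolding q_def by (rule vec_lst[OF y])
    finally show ?thesis using vec_V[OF p(1)] by blast
  qed
  show "Qf d (x - y) = 0 \<longleftrightarrow> Qf d (FF m k x - FF m k y) = 0" if xy: "x \<in> V d" "y \<in> V d" for x y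
  proof -
    define p where "p = lst d x"
    define q where "q = lst d y"
    have pq: "length p = d" "length q = d" by (simp_all add: p_def q_def)
    have vx: "vec p = x" "vec q = y" using xy vec_lst by (auto simp: p_def q_def)
    have fp: "length (fm m k p) = d" "ev W k (fm m k p) = ev W m p" using fm_prop[OF m k pq(1)] by auto
    have fq: "length (fm m k q) = d" "ev W k (fm m k q) = ev W m q" using fm_prop[OF m k pq(2)] by auto
    have "Qf d (x - y) = 0 \<longleftrightarrow> Ph \<inter> ev W m p \<inter> ev W m q \<noteq> {}"
      using light_iff[OF m pq] vx by simp
    also have "\<dots> \<longleftrightarrow> Ph \<inter> ev W k (fm m k p) \<inter> ev W k (fm m k q) \<noteq> {}"
      using fp fq by simp
    also have "\<dots> \<longleftrightarrow> Qf d (vec (fm m k p) - vec (fm m k q)) = 0"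
      by (rule light_iff[OF k fp(1) fq(1)])
    also have "vec (fm m k p) - vec (fm m k q) = FF m k x - FF m k y"
      by (simp add: FF_def p_def q_def)
    finally show ?thesis .
  qed
  show "Qf d (FF m k x - FF m k y) = Qf d (x - y)"
    if xy: "x \<in> V d" "y \<in> V d" and t: "x 0 = y 0" and t': "FF m k x 0 = FF m k y 0" for x y
  proof -
    define p where "p = lst d x"
    define q where "q = lst d y"
    have pq: "length p = d" "length q = d" by (simp_all add: p_def q_def)
    have fp: "length (fm m k p) = d" "ev W k (fm m k p) = ev W m p" using fm_prop[OF m k pq(1)] by auto
    have fq: "length (fm m k q) = d" "ev W k (fm m k q) = ev W m q" using fm_prop[OF m k pq(2)] by auto
    have d1: "1 \<le> d" using d3 by simp
    have e1: "ev W m p \<in> Evm d W m" "ev W m q \<in> Evm d W m" using Evm_eq[OF m] pq by auto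
    have hcs: "has_crd d W m (ev W m p)" "has_crd d W m (ev W m q)"
        "has_crd d W k (ev W m p)" "has_crd d W k (ev W m q)"
      using hc[OF m pq(1)] hc[OF m pq(2)] hc[OF k fp(1)] hc[OF k fq(1)] fp fq by auto
    have crds: "Crd d W m (ev W m p) = p" "Crd d W m (ev W m q) = q"
        "Crd d W k (ev W m p) = fm m k p" "Crd d W k (ev W m q) = fm m k q"
      using hc[OF m pq(1)] hc[OF m pq(2)] hc[OF k fp(1)] hc[OF k fq(1)] fp fq by auto
    have vx: "vec p = x" "vec q = y" using xy vec_lst by (auto simp: p_def q_def)
    have s1: "simul d W m (ev W m p) (ev W m q)"
      using crds t vx hd_vec[of p] hd_vec[of q] pq d1 by (simp add: simul_def)
    have s2: "simul d W k (ev W m p) (ev W m q)"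
      using crds t' hd_vec[of "fm m k p"] hd_vec[of "fm m k q"] fp fq d1 by (simp add: simul_def FF_def p_def q_def)
    have "dist d W m (ev W m p) (ev W m q) = dist d W k (ev W m p) (ev W m q)"
    proof -
      have ax: "\<forall>m\<in>IOb. \<forall>k\<in>IOb. \<forall>e1\<in>Evm d W m. \<forall>e2\<in>Evm d W m.
        has_crd d W m e1 \<and> has_crd d W m e2 \<and> has_crd d W k e1 \<and> has_crd d W k e2 \<and>
        simul d W m e1 e2 \<and> simul d W k e1 e2 \<longrightarrow> dist d W m e1 e2 = dist d W k e1 e2"
        using asd unfolding AxSimDist_def .
      show ?thesis using ax[rule_format, OF m k e1(1) e1(2)] hcs s1 s2 by simp
    qed
    then have "elen (vsub (tl p) (tl q)) = elen (vsub (tl (fm m k p)) (tl (fm m k q)))"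
      using crds by (simp add: dist_def)
    note EL = this
    have S: "sum_list (map (\<lambda>x. x ^ 2) (vsub (tl p) (tl q))) = sum_list (map (\<lambda>x. x ^ 2) (vsub (tl (fm m k p)) (tl (fm m k q))))"
    proof -
      from EL have "(elen (vsub (tl p) (tl q)))^2 = (elen (vsub (tl (fm m k p)) (tl (fm m k q))))^2" by simp
      then show ?thesis unfolding dist_sq[OF eof] .
    qed
    have "Qf d (x - y) = (hd p - hd q)^2 - sum_list (map (\<lambda>x. x ^ 2) (vsub (tl p) (tl q)))"
      using Qf_vec[OF pq d1] vx by simp
    moreover have "Qf d (FF m k x - FF m k y) = (hd (fm m k p) - hd (fm m k q))^2 - sum_list (map (\<lambda>x. x ^ 2) (vsub (tl (fm m k p)) (tl (fm m k q))))"
      using Qf_vec[OF fp(1) fq(1) d1] by (simp add: FF_def p_def q_def)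
    moreover have "hd p = hd q" using s1 crds by (simp add: simul_def)
    moreover have "hd (fm m k p) = hd (fm m k q)" using s2 crds by (simp add: simul_def)
    ultimately show ?thesis using S by simp
  qed
qed

end

lemma (in Model) interval:
  assumes m: "m \<in> IOb" and p: "length p = d" and q: "length q = d"
  shows "(time d W m (ev W m p) (ev W m q))^2 - (dist d W m (ev W m p) (ev W m q))^2 = Qf d (vec p - vec q)"
proof -
  have d1: "1 \<le> d" using d3 by simp
  have "(time d W m (ev W m p) (ev W m q))^2 = (hd p - hd q)^2"
    using hc[OF m p] hc[OF m q] by (simp add: time_def)
  moreover have "(dist d W m (ev W m p) (ev W m q))^2 = sum_list (map (\<lambda>x. x ^ 2) (vsub (tl p) (tl q)))"
    using hc[OF m p] hc[OF m q] dist_sq[OF eof] by (simp add: dist_def)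
  ultimately show ?thesis using Qf_vec[OF p q d1] by simp
qed

theorem mainTheorem1:
  fixes d :: nat and Ob IOb Ph :: "'b set" and W :: "'b \<Rightarrow> 'b \<Rightarrow> 'q::linordered_field list \<Rightarrow> bool"
  assumes "3 \<le> d" and "SpecRel d Ob IOb Ph W"
  shows "\<forall>m\<in>IOb. \<forall>k\<in>IOb. \<forall>e1\<in>Evm d W m. \<forall>e2\<in>Evm d W m.
           has_crd d W m e1 \<and> has_crd d W m e2 \<and> has_crd d W k e1 \<and> has_crd d W k e2 \<and>
           (time d W m e1 e2)^2 - (dist d W m e1 e2)^2 = (time d W k e1 e2)^2 - (dist d W k e1 e2)^2"
proof (intro ballI)
  interpret Model d Ob IOb Ph W using assms by unfold_locales
  fix m k e1 e2
  assume m: "m \<in> IOb" and k: "k \<in> IOb" and e1: "e1 \<in> Evm d W m" and e2: "e2 \<in> Evm d W m"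
  obtain p where p: "length p = d" "e1 = ev W m p" using e1 Evm_eq[OF m] by blast
  obtain q where q: "length q = d" "e2 = ev W m q" using e2 Evm_eq[OF m] by blast
  have fp: "length (fm m k p) = d" "ev W k (fm m k p) = ev W m p" using fm_prop[OF m k p(1)] by auto
  have fq: "length (fm m k q) = d" "ev W k (fm m k q) = ev W m q" using fm_prop[OF m k q(1)] by auto
  interpret L: LM d "FF m k" by (rule LM_inst[OF m k])
  have hcm: "has_crd d W m e1" "has_crd d W m e2" using hc[OF m p(1)] hc[OF m q(1)] p q by auto
  have hck: "has_crd d W k e1" "has_crd d W k e2" using hc[OF k fp(1)] hc[OF k fq(1)] fp fq p q by auto
  have "(time d W m e1 e2)^2 - (dist d W m e1 e2)^2 = Qf d (vec p - vec q)"
    using interval[OF m p(1) q(1)] p q by simp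
  also have "\<dots> = Qf d (FF m k (vec p) - FF m k (vec q))"
    using L.F_isometry[OF vec_V[OF p(1)] vec_V[OF q(1)]] by simp
  also have "FF m k (vec p) - FF m k (vec q) = vec (fm m k p) - vec (fm m k q)"
    using lst_vec[OF p(1)] lst_vec[OF q(1)] by (simp add: FF_def)
  also have "Qf d (vec (fm m k p) - vec (fm m k q)) = (time d W k e1 e2)^2 - (dist d W k e1 e2)^2"
    using interval[OF k fp(1) fq(1)] fp fq p q by simp
  finally show "has_crd d W m e1 \<and> has_crd d W m e2 \<and> has_crd d W k e1 \<and> has_crd d W k e2 \<and>
           (time d W m e1 e2)^2 - (dist d W m e1 e2)^2 = (time d W k e1 e2)^2 - (dist d W k e1 e2)^2"
    using hcm hck by simp
qed


end
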